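(* Under the standing assumptions below, let $e,f\in S_1$ with $ef\in S_0$. Then $\|\theta(e)+\theta(f)-I\|_{HS}\le10\delta$ and $\|\theta(e)-\theta(f)\|_{HS}\ge\frac43-10\delta>1$.
   Context: Standing assumptions: $S$ is a semilattice (commutative semigroup of idempotents), $0\le\delta<0.03$, and $\theta:S\to M_2(\mathbb C)$ satisfies $\|\theta(e)\theta(f)-\theta(ef)\|_{HS}\le\delta$ for all $e,f\in S$, where $\|A\|_{HS}=(\operatorname{tr}(A^*A))^{1/2}$. For $k\in\{0,1,2\}$, $S_k=\{x\in S:\ |\operatorname{tr}\theta(x)-k|<0.95\}$; these sets are pairwise disjoint and cover $S$. *)

theory Defs
  imports "HOL-Analysis.Analysis"
begin

definition mtrace :: "complex^2^2 \<Rightarrow> complex" where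
  "mtrace A = (\<Sum>i\<in>UNIV. A $ i $ i)"

definition hs_norm :: "complex^2^2 \<Rightarrow> real" where
  "hs_norm A = sqrt (\<Sum>i\<in>UNIV. \<Sum>j\<in>UNIV. (cmod (A $ i $ j))^2)"

text \<open>The sets S_k (S = the whole semilattice type).\<close>
definition Sk :: "('a \<Rightarrow> complex^2^2) \<Rightarrow> nat \<Rightarrow> 'a set" where
  "Sk \<theta> k = {x. cmod (mtrace (\<theta> x) - of_nat k) < 0.95}"

end

theory Submission
  imports Defs
begin


lemma hs_norm_eq: "hs_norm M = norm M"
  unfolding hs_norm_def norm_vec_def L2_set_def
  by (simp add: real_sqrt_pow2 sum_nonneg)

lemma mtrace2: "mtrace M = M$1$1 + M$2$2"
  by (simp add: mtrace_def sum_2)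

lemma norm_sq4: "(norm (M::complex^2^2))^2 = cmod (M$1$1)^2 + cmod (M$1$2)^2 + cmod (M$2$1)^2 + cmod (M$2$2)^2"
  unfolding norm_vec_def L2_set_def
  by (simp add: real_sqrt_pow2 sum_nonneg sum_2)

lemma para: "cmod (a+b)^2 + cmod (a-b)^2 = 2*cmod a^2 + 2*cmod b^2"
  unfolding cmod_power2 by (simp add: power2_eq_square algebra_simps)

lemma hs_sq: "(norm (M::complex^2^2))^2 = 2*(cmod ((M$1$1 + M$2$2)/2))^2 + 2*(cmod ((M$1$1 - M$2$2)/2))^2 + (cmod (M$1$2))^2 + (cmod (M$2$1))^2"
proof -
  have "cmod (M$1$1)^2 + cmod (M$2$2)^2 = 2*(cmod ((M$1$1 + M$2$2)/2))^2 + 2*(cmod ((M$1$1 - M$2$2)/2))^2"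
    using para[of "(M$1$1 + M$2$2)/2" "(M$1$1 - M$2$2)/2"] by (simp add: field_simps)
  then show ?thesis by (simp add: norm_sq4)
qed

lemma mm_entries: fixes A B :: "complex^2^2" shows "(A ** B)$i$j = A$i$1 * B$1$j + A$i$2 * B$2$j"
  by (simp add: matrix_matrix_mult_def sum_2)

lemma cm_mult_sq: "cmod (a*b)^2 = cmod a^2 * cmod b^2"
  by (simp add: norm_mult power_mult_distrib)

lemma nearidem:
  fixes M :: "complex^2^2"
  shows "norm (M**M - M)^2 = 2*cmod ((((M$1$1 + M$2$2 - 1))^2-1)/4 + (((M$1$1 - M$2$2)/2)^2 + M$1$2*M$2$1))^2
      + cmod (M$1$1 + M$2$2 - 1)^2 * (2*cmod ((M$1$1 - M$2$2)/2)^2 + cmod (M$1$2)^2 + cmod (M$2$1)^2)"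
proof -
  define w where "w = M$1$1 + M$2$2 - 1"
  have e1: "((M**M - M)$1$1 + (M**M - M)$2$2)/2 = (w^2-1)/4 + (((M$1$1 - M$2$2)/2)^2 + M$1$2*M$2$1)"
    unfolding w_def by (simp add: mm_entries) (simp add: power2_eq_square field_simps)
  have e2: "((M**M - M)$1$1 - (M**M - M)$2$2)/2 = w * ((M$1$1 - M$2$2)/2)"
    unfolding w_def by (simp add: mm_entries) (simp add: power2_eq_square field_simps)
  have e3: "(M**M - M)$1$2 = w * M$1$2"
    unfolding w_def by (simp add: mm_entries) (simp add: field_simps)
  have e4: "(M**M - M)$2$1 = w * M$2$1"
    unfolding w_def by (simp add: mm_entries) (simp add: field_simps)
  have "norm (M**M - M)^2 = 2*cmod ((w^2-1)/4 + (((M$1$1 - M$2$2)/2)^2 + M$1$2*M$2$1))^2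
      + 2* (cmod w^2 * cmod ((M$1$1 - M$2$2)/2)^2) + cmod w^2 * cmod (M$1$2)^2 + cmod w^2 * cmod (M$2$1)^2"
    unfolding hs_sq[of "M**M - M"] e1 e2 e3 e4 cm_mult_sq by simp
  then show ?thesis unfolding w_def[symmetric] by (simp only: distrib_left mult.assoc)
qed
lemma normM:
  fixes M :: "complex^2^2"
  shows "norm M^2 = cmod (M$1$1 + M$2$2 - 1 + 1)^2/2
      + (2*cmod ((M$1$1 - M$2$2)/2)^2 + cmod (M$1$2)^2 + cmod (M$2$1)^2)"
proof -
  have "cmod ((M$1$1 + M$2$2)/2)^2 = cmod (M$1$1 + M$2$2)^2/4"
    by (simp add: norm_divide power_divide)
  then show ?thesis unfolding hs_sq[of M] by simp
qed

lemma nu_n: "2 * cmod (x^2 + y*z) \<le> 2*cmod x^2 + cmod y^2 + cmod z^2"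
proof -
  have "cmod (x^2 + y*z) \<le> cmod x^2 + cmod y * cmod z"
    by (metis norm_mult norm_power norm_triangle_ineq)
  moreover have "2 * (cmod y * cmod z) \<le> cmod y^2 + cmod z^2"
    using sum_squares_bound[of "cmod y" "cmod z"] by (simp add: power2_eq_square)
  ultimately show ?thesis by linarith
qed

lemma wfacts: fixes w :: complex
  shows "cmod (w+1) * cmod (w-1) = cmod (w^2-1)" "cmod (w+1) + cmod (w-1) \<ge> 2"
   "cmod w \<ge> 1 - cmod (w+1)" "cmod w \<ge> 1 - cmod (w-1)" "cmod (w+1) \<ge> 1 - cmod w"
   "cmod (w^2 - 1) \<ge> 1 - cmod w ^2"
proof -
  show "cmod (w+1) * cmod (w-1) = cmod (w^2-1)"
    by (metis norm_mult power2_eq_square square_diff_one_factored mult.commute)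
  show "cmod (w+1) + cmod (w-1) \<ge> 2"
    using norm_triangle_ineq4[of "w+1" "w-1"] by simp
  show "cmod w \<ge> 1 - cmod (w+1)"
    using norm_triangle_ineq4[of "w+1" "w"] by simp
  show "cmod w \<ge> 1 - cmod (w-1)"
    using norm_triangle_ineq4[of "w" "w-1"] by simp
  show "cmod (w+1) \<ge> 1 - cmod w"
    using norm_triangle_ineq4[of "w+1" "w"] by simp
  show "cmod (w^2 - 1) \<ge> 1 - cmod w ^2"
    using norm_triangle_ineq4[of "w^2" "w^2 - 1"] by (simp add: norm_power)
qed
lemma sqle: "(x::real) \<ge> 0 \<Longrightarrow> x \<le> c \<Longrightarrow> x^2 \<le> c^2"
  by (simp add: power_mono)

lemma sqle': "(x::real) \<ge> 0 \<Longrightarrow> c \<ge> 0 \<Longrightarrow> x^2 \<le> c^2 \<Longrightarrow> x \<le> c"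
  using power2_le_imp_le by blast

declare power_divide[simp]

lemma RA:
 fixes p q r a N nu \<eta> :: real
 assumes nn: "p\<ge>0" "q\<ge>0" "r\<ge>0" "a\<ge>0" "N\<ge>0" "\<eta>\<ge>0" and eta: "\<eta> \<le> (3/100)"
  and h1: "2*a^2 + p^2*nu \<le> \<eta>^2" and h2: "q*r \<le> 4*(a+N)" and h3: "q*r \<ge> 1 - p^2"
  and h4: "2*N \<le> nu" and h5: "q + r \<ge> 2" and h6: "p \<ge> 1 - q" "p \<ge> 1 - r" and hp: "p < (95/100)"
 shows "nu \<ge> 4/9 \<and> p^2 \<le> 9/4*\<eta>^2"
proof -
  have nu0: "nu \<ge> 0" using h4 nn by (simp, linarith?)
  have e2: "\<eta>^2 \<le> (9/10000)" using sqle[OF nn(6) eta] by (simp add: power2_eq_square)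
  have pn: "p^2*nu \<ge> 0" using nu0 by simp
  have a2: "a^2 \<ge> 0" by simp
  have "a^2 \<le> (213/10000)^2" using h1 e2 pn by simp
  hence a: "a \<le> (213/10000)" using sqle'[OF nn(4), of "(213/10000)"] by simp
  show ?thesis
  proof (cases "p \<ge> 1/2")
    case True
    have "(1/2)^2 \<le> p^2" using sqle[of "1/2" p] True by simp
    hence "(1/4)*nu \<le> p^2*nu" using mult_right_mono[OF _ nu0, of "(1/2)^2" "p^2"] by simp
    hence nu1: "nu \<le> (36/10000)" using h1 e2 by simp (use a2 in linarith)
    hence qr: "q*r \<le> (924/10000)" using h2 h4 a by (simp, linarith?)
    have False
    proof (cases "q \<le> r")
      case True
      hence r1: "r \<ge> 1" using h5 by (simp, linarith?)
      have "q*1 \<le> q*r" using mult_left_mono[OF r1 nn(2)] .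
      hence q1: "q \<le> (924/10000)" using qr by simp
      hence "p \<ge> (9076/10000)" using h6 by (simp, linarith?)
      hence "(9076/10000)^2 \<le> p^2" using sqle[of "(9076/10000)" p] by simp
      hence "(82/100) * nu \<le> p^2*nu" using mult_right_mono[OF _ nu0, of "(82/100)" "p^2"] by simp
      hence "nu \<le> (11/10000)" using h1 e2 by simp (use a2 in linarith)
      hence qr2: "q*r \<le> (874/10000)" using h2 h4 a by (simp, linarith?)
      have "r \<ge> (19/10)" using h5 q1 by (simp, linarith?)
      hence "q*(19/10) \<le> q*r" using mult_left_mono[OF _ nn(2)] by blast
      hence "q \<le> (46/1000)" using qr2 by simp
      then show False using h6 hp by (simp, linarith?)
    next
      case False
      hence r1: "q \<ge> 1" using h5 by (simp, linarith?)
      have "r*1 \<le> r*q" using mult_left_mono[OF r1 nn(3)] .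
      hence q1: "r \<le> (924/10000)" using qr by (simp add: mult.commute)
      hence "p \<ge> (9076/10000)" using h6 by (simp, linarith?)
      hence "(9076/10000)^2 \<le> p^2" using sqle[of "(9076/10000)" p] by simp
      hence "(82/100) * nu \<le> p^2*nu" using mult_right_mono[OF _ nu0, of "(82/100)" "p^2"] by simp
      hence "nu \<le> (11/10000)" using h1 e2 by simp (use a2 in linarith)
      hence qr2: "q*r \<le> (874/10000)" using h2 h4 a by (simp, linarith?)
      have "q \<ge> (19/10)" using h5 q1 by (simp, linarith?)
      hence "r*(19/10) \<le> r*q" using mult_left_mono[OF _ nn(3)] by blast
      hence "r \<le> (46/1000)" using qr2 by (simp add: mult.commute)
      then show False using h6 hp by (simp, linarith?)
    qed
    then show ?thesis ..
  next
    case False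
    hence "p^2 \<le> (1/2)^2" using sqle[of p "1/2"] nn by simp
    hence "N \<ge> (1662/10000)" using h2 h3 a by simp
    hence nu2: "nu \<ge> (3324/10000)" using h4 by (simp, linarith?)
    hence "p^2 * (3324/10000) \<le> p^2 * nu" using mult_left_mono[of "3324/10000" nu "p^2"] by simp
    hence "p^2 \<le> (271/100000)" using h1 e2 by simp (use a2 in linarith)
    hence "N \<ge> (228/1000)" using h2 h3 a by simp
    hence nu3: "nu \<ge> (456/1000)" using h4 by (simp, linarith?)
    hence "p^2 * (456/1000) \<le> p^2 * nu" using mult_left_mono[of "456/1000" nu "p^2"] by simp
    hence "p^2 * (456/1000) \<le> \<eta>^2" using h1 by simp (use a2 in linarith)
    hence "p^2 \<le> 9/4*\<eta>^2" by simp (use zero_le_power2[of \<eta>] in linarith)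
    then show ?thesis using nu3 by simp
  qed
qed
lemma RC:
 fixes p q r a N nu \<eta> :: real
 assumes nn: "p\<ge>0" "q\<ge>0" "r\<ge>0" "a\<ge>0" "N\<ge>0" "\<eta>\<ge>0" and eta: "\<eta> \<le> 3/100"
  and h1: "2*a^2 + p^2*nu \<le> \<eta>^2" and h2: "q*r \<le> 4*(a+N)" and h3: "q*r \<ge> 1 - p^2"
  and h4: "2*N \<le> nu" and h5: "q + r \<ge> 2" and h6: "p \<ge> 1 - q" "p \<ge> 1 - r" and h7: "q \<ge> 1 - p"
  and hq: "q < 95/100"
 shows "q^2/2 + nu \<le> 4*\<eta>^2"
proof -
  have nu0: "nu \<ge> 0" using h4 nn by linarith
  have e2: "\<eta>^2 \<le> 9/10000" using sqle[OF nn(6) eta] by (simp add: power2_eq_square)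
  have pn: "p^2*nu \<ge> 0" using nu0 by simp
  have a2: "a^2 \<ge> 0" by simp
  have "a^2 \<le> (213/10000)^2" using h1 e2 pn by simp
  hence a: "a \<le> 213/10000" using sqle'[OF nn(4), of "213/10000"] by simp
  show ?thesis
  proof (cases "p \<ge> 1/2")
    case True
    have "(1/2)^2 \<le> p^2" using sqle[of "1/2" p] True by simp
    hence "(1/4)*nu \<le> p^2*nu" using mult_right_mono[OF _ nu0, of "(1/2)^2" "p^2"] by simp
    hence nu1: "nu \<le> 36/10000" using h1 e2 by simp (use a2 in linarith)
    hence qr: "q*r \<le> 924/10000" using h2 h4 a by simp
    have qler: "q \<le> r"
    proof (rule ccontr)
      assume "\<not> q \<le> r"
      hence r1: "q \<ge> 1" using h5 by simp
      have "r*1 \<le> r*q" using mult_left_mono[OF r1 nn(3)] .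
      hence q1: "r \<le> 924/10000" using qr by (simp add: mult.commute)
      then show False using h5 hq by simp
    qed
    hence r1: "r \<ge> 1" using h5 by simp
    have "q*1 \<le> q*r" using mult_left_mono[OF r1 nn(2)] .
    hence q1: "q \<le> 924/10000" using qr by simp
    hence "p \<ge> 9076/10000" using h6 by simp
    hence "(9076/10000)^2 \<le> p^2" using sqle[of "9076/10000" p] by simp
    hence "82/100 * nu \<le> p^2*nu" using mult_right_mono[OF _ nu0, of "82/100" "p^2"] by simp
    hence nu2: "82/100 * nu \<le> \<eta>^2" using h1 by simp (use a2 in linarith)
    have "\<eta>^2 \<le> 3/100 * \<eta>" using mult_right_mono[OF eta nn(6)] by (simp add: power2_eq_square)
    hence N1: "N \<le> 183/10000 * \<eta>" using nu2 h4 nn(6) by linarith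
    have "a^2 \<le> (7072/10000 * \<eta>)^2" using h1 pn by (simp add: power_mult_distrib) (use zero_le_power2[of \<eta>] in linarith)
    hence a1: "a \<le> 7072/10000 * \<eta>" using sqle'[OF nn(4), of "7072/10000 * \<eta>"] nn(6) by simp
    have "r \<ge> 19/10" using h5 q1 by simp
    hence "q*(19/10) \<le> q*r" using mult_left_mono[OF _ nn(2)] by blast
    hence "q*(19/10) \<le> 4*(7072/10000 * \<eta> + 183/10000 * \<eta>)" using h2 a1 N1 by simp
    hence "q \<le> 15274/10000 * \<eta>" using nn(6) by simp
    hence "q^2 \<le> (15274/10000 * \<eta>)^2" using sqle[OF nn(2)] by blast
    hence "q^2 \<le> 2334/1000 * \<eta>^2" by (simp add: power_mult_distrib) (use zero_le_power2[of \<eta>] in linarith)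
    then show ?thesis using nu2 by simp (use zero_le_power2[of \<eta>] in linarith)
  next
    case False
    hence "p^2 \<le> 9/4*\<eta>^2" using RA[OF nn eta h1 h2 h3 h4 h5 h6] by simp
    hence "p^2 \<le> (45/1000)^2" using e2 by simp
    hence "p \<le> 45/1000" using sqle'[OF nn(1), of "45/1000"] by simp
    then show ?thesis using h7 hq by simp
  qed
qed

lemma RX:
 fixes p q nu \<eta> \<delta> :: real
 assumes nu0: "nu \<ge> 0" and "p \<ge> 0" "q \<ge> 0" "\<delta> \<ge> 0" "\<delta> \<le> 3/100" "\<eta> \<ge> 0" "\<eta> \<le> 8*\<delta>"
  and h1: "p^2*nu \<le> \<eta>^2" and hq: "q \<le> 3*\<delta>" and h6: "p \<ge> 1 - q"
 shows "q^2/2 + nu \<le> 100*\<delta>^2"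
proof -
  have "p \<ge> 91/100" using assms by simp
  hence "(91/100)^2 \<le> p^2" using sqle[of "91/100" p] by simp
  hence nu: "nu \<ge> 0 \<Longrightarrow> 82/100 * nu \<le> \<eta>^2" using h1 mult_right_mono[of "82/100" "p^2" nu] by simp
  have "\<eta>^2 \<le> (8*\<delta>)^2" using sqle assms by blast
  hence e: "\<eta>^2 \<le> 64*\<delta>^2" by (simp add: power_mult_distrib)
  have "q^2 \<le> (3*\<delta>)^2" using sqle assms by blast
  hence "q^2 \<le> 9*\<delta>^2" by (simp add: power_mult_distrib)
  then show ?thesis using nu e zero_le_power2[of \<delta>] nu0 by simp
qed
lemma decomp:
  fixes M :: "complex^2^2"
  assumes hM: "norm (M**M - M) \<le> \<eta>"
  defines "w \<equiv> M$1$1 + M$2$2 - 1"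
  defines "nu \<equiv> 2*cmod ((M$1$1 - M$2$2)/2)^2 + cmod (M$1$2)^2 + cmod (M$2$1)^2"
  defines "n \<equiv> ((M$1$1 - M$2$2)/2)^2 + M$1$2*M$2$1"
  defines "a \<equiv> cmod ((w^2-1)/4 + n)"
  shows "2*a^2 + cmod w^2*nu \<le> \<eta>^2" "cmod (w+1) * cmod (w-1) \<le> 4*(a + cmod n)"
    "cmod (w+1) * cmod (w-1) \<ge> 1 - cmod w^2" "2*cmod n \<le> nu" "norm M^2 = cmod (w+1)^2/2 + nu"
proof -
  show "2*a^2 + cmod w^2*nu \<le> \<eta>^2"
    using nearidem[of M] sqle[OF norm_ge_zero hM] unfolding a_def n_def w_def nu_def by simp
  have "cmod (w+1) * cmod (w-1) = cmod (w^2-1)" by (rule wfacts(1))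
  also have "\<dots> = 4 * cmod ((w^2-1)/4)" by (simp add: norm_divide)
  also have "(w^2-1)/4 = ((w^2-1)/4 + n) - n" by simp
  also have "cmod \<dots> \<le> a + cmod n" unfolding a_def by (rule norm_triangle_ineq4)
  finally show "cmod (w+1) * cmod (w-1) \<le> 4*(a + cmod n)" by simp
  show "cmod (w+1) * cmod (w-1) \<ge> 1 - cmod w^2" using wfacts(1,6)[of w] by simp
  show "2*cmod n \<le> nu" unfolding n_def nu_def by (rule nu_n)
  show "norm M^2 = cmod (w+1)^2/2 + nu" using normM[of M] unfolding w_def nu_def by simp
qed

lemma LA:
  fixes M :: "complex^2^2"
  assumes hM: "norm (M**M - M) \<le> \<eta>" and e0: "\<eta> \<ge> 0" and e1: "\<eta> \<le> 3/100"
    and tr: "cmod (M$1$1 + M$2$2 - 1) < 95/100"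
  shows "cmod (M$1$1 + M$2$2 - 1) \<le> 3/2*\<eta>"
    "2*cmod ((M$1$1 - M$2$2)/2)^2 + cmod (M$1$2)^2 + cmod (M$2$1)^2 \<ge> 4/9"
proof -
  define w where "w = M$1$1 + M$2$2 - 1"
  note D = decomp[OF hM, folded w_def]
  have R: "2*cmod ((M$1$1 - M$2$2)/2)^2 + cmod (M$1$2)^2 + cmod (M$2$1)^2 \<ge> 4/9 \<and> cmod w^2 \<le> 9/4*\<eta>^2"
    by (rule RA[OF norm_ge_zero norm_ge_zero norm_ge_zero norm_ge_zero norm_ge_zero e0 e1 D(1) D(2) D(3) D(4)
          wfacts(2) wfacts(3) wfacts(4)]) (use tr w_def in simp)
  then show "2*cmod ((M$1$1 - M$2$2)/2)^2 + cmod (M$1$2)^2 + cmod (M$2$1)^2 \<ge> 4/9" by simp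
  have "cmod w^2 \<le> (3/2*\<eta>)^2" using R by (simp add: power_mult_distrib)
  then show "cmod (M$1$1 + M$2$2 - 1) \<le> 3/2*\<eta>" unfolding w_def[symmetric]
    using sqle'[OF norm_ge_zero, of "3/2*\<eta>" w] e0 by simp
qed

lemma LC:
  fixes M :: "complex^2^2"
  assumes hM: "norm (M**M - M) \<le> \<eta>" and e0: "\<eta> \<ge> 0" and e1: "\<eta> \<le> 3/100"
    and tr: "cmod (M$1$1 + M$2$2) < 95/100"
  shows "norm M \<le> 2*\<eta>"
proof -
  define w where "w = M$1$1 + M$2$2 - 1"
  note D = decomp[OF hM, folded w_def]
  have "cmod (w+1)^2/2 + (2*cmod ((M$1$1 - M$2$2)/2)^2 + cmod (M$1$2)^2 + cmod (M$2$1)^2) \<le> 4*\<eta>^2"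
    by (rule RC[OF norm_ge_zero norm_ge_zero norm_ge_zero norm_ge_zero norm_ge_zero e0 e1 D(1) D(2) D(3) D(4)
          wfacts(2) wfacts(3) wfacts(4) wfacts(5)]) (use tr w_def in simp)
  hence "norm M^2 \<le> (2*\<eta>)^2" using D(5) by (simp add: power_mult_distrib)
  then show ?thesis using sqle'[OF norm_ge_zero, of "2*\<eta>" M] e0 by simp
qed

lemma LX:
  fixes M :: "complex^2^2"
  assumes hM: "norm (M**M - M) \<le> \<eta>" and "\<eta> \<le> 8*\<delta>" "\<delta> \<ge> 0" "\<delta> \<le> 3/100"
    and tr: "cmod (M$1$1 + M$2$2) \<le> 3*\<delta>"
  shows "norm M \<le> 10*\<delta>"
proof -
  define w where "w = M$1$1 + M$2$2 - 1"
  note D = decomp[OF hM, folded w_def]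
  have e0: "\<eta> \<ge> 0" using hM norm_ge_zero order_trans by blast
  have "2*cmod n \<le> nu \<Longrightarrow> nu \<ge> 0" for n nu by (smt (verit) norm_ge_zero)
  hence nu0: "2*cmod ((M$1$1 - M$2$2)/2)^2 + cmod (M$1$2)^2 + cmod (M$2$1)^2 \<ge> 0" using D(4) by blast
  have "cmod (w+1)^2/2 + (2*cmod ((M$1$1 - M$2$2)/2)^2 + cmod (M$1$2)^2 + cmod (M$2$1)^2) \<le> 100*\<delta>^2"
    by (rule RX[OF nu0 norm_ge_zero norm_ge_zero assms(3) assms(4) e0 assms(2) _ _ wfacts(3)])
      (use D(1) tr w_def zero_le_power2 in \<open>simp_all, smt (verit)\<close>)
  hence "norm M^2 \<le> (10*\<delta>)^2" using D(5) by (simp add: power_mult_distrib)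
  then show ?thesis using sqle'[OF norm_ge_zero, of "10*\<delta>" M] assms by simp
qed


lemma mat1_entries: "(mat 1 :: complex^2^2)$1$1 = 1" "(mat 1 :: complex^2^2)$2$2 = 1"
  "(mat 1 :: complex^2^2)$1$2 = 0" "(mat 1 :: complex^2^2)$2$1 = 0"
  by (simp_all add: mat_def)

lemma ident:
  fixes A B C :: "complex^2^2"
  shows "(mat 1 - A - B) ** (mat 1 - A - B) - (mat 1 - A - B)
     = (A**A - A) + (B**B - B) + (A**B - C) + (B**A - C) + (C + C)"
  by (simp add: vec_eq_iff forall_2 mm_entries mat1_entries algebra_simps)

lemma twoB:
  fixes B :: "complex^2^2"
  shows "norm (B + B - mat 1)^2 \<ge> 4*(2*cmod ((B$1$1 - B$2$2)/2)^2 + cmod (B$1$2)^2 + cmod (B$2$1)^2)"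
proof -
  have e1: "((B + B - mat 1)$1$1 - (B + B - mat 1)$2$2)/2 = 2*((B$1$1 - B$2$2)/2)"
    by (simp add: mat1_entries field_simps)
  have e2: "(B + B - mat 1)$1$2 = 2*B$1$2" "(B + B - mat 1)$2$1 = 2*B$2$1"
    by (simp_all add: mat1_entries)
  show ?thesis unfolding hs_sq[of "B + B - mat 1"] e1 e2 cm_mult_sq by simp
qed

theorem lemmal:
  fixes \<theta> :: "'a::ab_semigroup_mult \<Rightarrow> complex^2^2"
    and \<delta> :: real and e f :: 'a
  assumes idem: "\<And>x::'a. x * x = x"
    and d0: "0 \<le> \<delta>" and d1: "\<delta> < 0.03"
    and approx: "\<And>x y. hs_norm (\<theta> x ** \<theta> y - \<theta> (x * y)) \<le> \<delta>"
    and e: "e \<in> Sk \<theta> 1" and f: "f \<in> Sk \<theta> 1"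
    and ef: "e * f \<in> Sk \<theta> 0"
  shows "hs_norm (\<theta> e + \<theta> f - mat 1) \<le> 10 * \<delta>
     \<and> hs_norm (\<theta> e - \<theta> f) \<ge> 4/3 - 10 * \<delta>
     \<and> 4/3 - 10 * \<delta> > 1"
proof -
  define A where "A = \<theta> e"
  define B where "B = \<theta> f"
  define C where "C = \<theta> (e*f)"
  have d1': "\<delta> \<le> 3/100" using d1 by simp
  have ap: "norm (\<theta> x ** \<theta> y - \<theta> (x * y)) \<le> \<delta>" for x y using approx[of x y] by (simp add: hs_norm_eq)
  have hA: "norm (A**A - A) \<le> \<delta>" using ap[of e e] idem[of e] by (simp add: A_def)
  have hB: "norm (B**B - B) \<le> \<delta>" using ap[of f f] idem[of f] by (simp add: B_def)
  have hC: "norm (C**C - C) \<le> \<delta>" using ap[of "e*f" "e*f"] idem[of "e*f"] by (simp add: C_def)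
  have hAB: "norm (A**B - C) \<le> \<delta>" using ap[of e f] by (simp add: A_def B_def C_def)
  have hBA: "norm (B**A - C) \<le> \<delta>" using ap[of f e] by (simp add: A_def B_def C_def mult.commute)
  have trA: "cmod (A$1$1 + A$2$2 - 1) < 95/100" using e by (simp add: Sk_def mtrace2 A_def)
  have trB: "cmod (B$1$1 + B$2$2 - 1) < 95/100" using f by (simp add: Sk_def mtrace2 B_def)
  have trC: "cmod (C$1$1 + C$2$2) < 95/100" using ef by (simp add: Sk_def mtrace2 C_def)
  note LAa = LA[OF hA d0 d1' trA] and LBb = LA[OF hB d0 d1' trB]
  have nC: "norm C \<le> 2*\<delta>" by (rule LC[OF hC d0 d1' trC])
  define M where "M = mat 1 - A - B"
  have "norm (M**M - M) \<le> norm (A**A - A) + norm (B**B - B) + norm (A**B - C) + norm (B**A - C) + norm (C + C)"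
    unfolding M_def ident[of A B C] by (smt (verit) norm_triangle_ineq)
  also have "\<dots> \<le> 8*\<delta>" using hA hB hAB hBA nC norm_triangle_ineq[of C C] by simp
  finally have hM: "norm (M**M - M) \<le> 8*\<delta>" .
  have "M$1$1 + M$2$2 = - ((A$1$1 + A$2$2 - 1) + (B$1$1 + B$2$2 - 1))"
    by (simp add: M_def mat1_entries)
  hence "cmod (M$1$1 + M$2$2) \<le> cmod (A$1$1 + A$2$2 - 1) + cmod (B$1$1 + B$2$2 - 1)"
    by (simp only: norm_minus_cancel norm_triangle_ineq)
  hence trM: "cmod (M$1$1 + M$2$2) \<le> 3*\<delta>" using LAa(1) LBb(1) by simp
  have nM: "norm M \<le> 10*\<delta>" by (rule LX[OF hM order_refl d0 d1' trM])
  have X: "norm (A + B - mat 1) = norm M" unfolding M_def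
    by (metis minus_diff_eq norm_minus_cancel diff_diff_eq add.commute)
  have "norm (B + B - mat 1)^2 \<ge> (4/3)^2" using twoB[of B] LBb(2) by simp
  hence n2: "norm (B + B - mat 1) \<ge> 4/3" using sqle'[of "4/3" "norm (B + B - mat 1)"] by simp
  have "A - B = (A + B - mat 1) - (B + B - mat 1)" by simp
  hence "norm (A - B) \<ge> norm (B + B - mat 1) - norm (A + B - mat 1)"
    by (metis norm_minus_commute norm_triangle_ineq2)
  hence "norm (A - B) \<ge> 4/3 - 10*\<delta>" using n2 nM X by simp
  then show ?thesis using nM X d1' by (simp add: hs_norm_eq A_def B_def)
qed
end
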